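(* Let $S$ be a word with $k=|\mathrm{Alph}(S)|\ge 4$. If $\Psi(S)$ holds and $S$ is s-primitive, then $|S|\le (2k-2)\,\gamma(k-1)$.
   Context: $\mathrm{Alph}(S)$ is the set of letters of $S$. For $S=a_1\cdots a_n$ with $n\ge 4$, $\Psi(S)$ holds iff $a_1\notin\{a_{n-1},a_n\}$ and $a_n\notin\{a_1,a_2\}$; for $n\le 3$, $\Psi(S)$ holds by convention. For words $C,S$, $C$ is an \emph{s-cover} of $S$ if for every position $i$ of $S$ there exist indices $j_0<\dots<j_{|C|-1}$ with $S[j_t]=C[t]$ for all $t$ and $i\in\{j_0,\dots,j_{|C|-1}\}$. An s-cover is \emph{non-trivial} if $|C|<|S|$; $S$ is \emph{s-primitive} if it has no non-trivial s-cover. $\gamma(k)$ is the maximum length of an s-primitive word over an alphabet of size $k$. *)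

theory Defs
  imports Main "HOL-Library.Extended_Nat"
begin

text \<open>Words are lists; positions are 0-based.\<close>

definition Alph :: "'a list \<Rightarrow> 'a set" where
  "Alph S = set S"

definition Psi :: "'a list \<Rightarrow> bool" where
  "Psi S = (let n = length S in
     n \<ge> 4 \<longrightarrow>
       (S ! 0 \<notin> {S ! (n - 2), S ! (n - 1)} \<and> S ! (n - 1) \<notin> {S ! 0, S ! 1}))"

definition s_cover :: "'a list \<Rightarrow> 'a list \<Rightarrow> bool" where
  "s_cover C S = (\<forall>i < length S. \<exists>js. length js = length C \<and> sorted_wrt (<) js \<and>
      (\<forall>j \<in> set js. j < length S) \<and>
      (\<forall>t < length C. S ! (js ! t) = C ! t) \<and> i \<in> set js)"

definition s_primitive :: "'a list \<Rightarrow> bool" where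
  "s_primitive S = (\<not> (\<exists>C. s_cover C S \<and> length C < length S))"

text \<open>gamma k: maximum length of an s-primitive word over a k-letter alphabet
  (taken as {0..<k}); as a supremum in enat (infinity if unbounded).\<close>
definition gamma :: "nat \<Rightarrow> enat" where
  "gamma k = (SUP w \<in> {w :: nat list. set w \<subseteq> {..<k} \<and> s_primitive w}. enat (length w))"

end

theory Submission
  imports Defs "HOL-Library.Sublist"
begin


definition emb :: "nat list \<Rightarrow> 'a list \<Rightarrow> 'a list \<Rightarrow> bool" where
  "emb js u T = (length js = length u \<and> sorted_wrt (<) js \<and> (\<forall>j\<in>set js. j < length T) \<and>
     (\<forall>i<length u. T ! (js ! i) = u ! i))"

lemma subseq_emb: "subseq u T \<Longrightarrow> \<exists>js. emb js u T"
proof (induction rule: list_emb.induct)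
  case (list_emb_Nil ys)
  then show ?case by (auto simp: emb_def)
next
  case (list_emb_Cons xs ys y)
  then obtain js where "emb js xs ys" by blast
  then have "emb (map Suc js) xs (y # ys)"
    by (auto simp: emb_def sorted_wrt_map)
  then show ?case by blast
next
  case (list_emb_Cons2 x y xs ys)
  then obtain js where "emb js xs ys" by blast
  then have "emb (0 # map Suc js) (x # xs) (y # ys)"
    using list_emb_Cons2.hyps by (auto simp: emb_def sorted_wrt_map nth_Cons split: nat.splits)
  then show ?case by blast
qed

lemma emb_subseq: "emb js u T \<Longrightarrow> subseq u T"
proof (induction u arbitrary: js T)
  case Nil
  then show ?case by simp
next
  case (Cons x u)
  then obtain j js' where js: "js = j # js'" by (cases js) (auto simp: emb_def)
  have jT: "j < length T" using Cons.prems js by (auto simp: emb_def)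
  have Tj: "T ! j = x" using Cons.prems js by (auto simp: emb_def)
  have gt: "\<forall>j'\<in>set js'. j < j'" using Cons.prems js by (auto simp: emb_def)
  have "emb (map (\<lambda>i. i - Suc j) js') u (drop (Suc j) T)"
    unfolding emb_def
  proof (intro conjI allI impI ballI)
    show "length (map (\<lambda>i. i - Suc j) js') = length u" using Cons.prems js by (auto simp: emb_def)
    show "sorted_wrt (<) (map (\<lambda>i. i - Suc j) js')"
    proof -
      have "sorted_wrt (<) js'" using Cons.prems js by (auto simp: emb_def)
      then have "sorted_wrt (\<lambda>a b. a - Suc j < b - Suc j) js'"
        by (rule sorted_wrt_mono_rel[rotated]) (use gt in auto)
      then show ?thesis by (simp add: sorted_wrt_map)
    qed
  next
    fix i assume "i \<in> set (map (\<lambda>i. i - Suc j) js')"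
    then obtain ia where "ia \<in> set js'" "i = ia - Suc j" by auto
    moreover have "ia < length T" "j < ia" using calculation gt Cons.prems js by (auto simp: emb_def)
    ultimately show "i < length (drop (Suc j) T)" by simp
  next
    fix i assume i: "i < length u"
    have "i < length js'" using Cons.prems js i by (auto simp: emb_def)
    then have "js' ! i \<in> set js'" by simp
    then have "j < js' ! i" "js' ! i < length T" using gt Cons.prems js by (auto simp: emb_def)
    moreover have "T ! (js ! Suc i) = (x # u) ! Suc i" using Cons.prems js i by (auto simp: emb_def)
    ultimately show "drop (Suc j) T ! (map (\<lambda>i. i - Suc j) js' ! i) = u ! i"
      using \<open>i < length js'\<close> js by auto
  qed
  then have "subseq u (drop (Suc j) T)" using Cons.IH by blast
  moreover have "T = take j T @ x # drop (Suc j) T" using jT Tj id_take_nth_drop by fastforce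
  ultimately show ?case
    by (metis list_emb_Cons2 list_emb_append2)
qed

lemma cover_char:
  "s_cover C S \<longleftrightarrow> (\<forall>p<length S. \<exists>u v. C = u @ S ! p # v \<and> subseq u (take p S) \<and> subseq v (drop (Suc p) S))"
proof
  assume cov: "s_cover C S"
  show "\<forall>p<length S. \<exists>u v. C = u @ S ! p # v \<and> subseq u (take p S) \<and> subseq v (drop (Suc p) S)"
  proof (intro allI impI)
    fix p assume p: "p < length S"
    obtain js where js1: "length js = length C" and js2: "sorted_wrt (<) js" and js3: "\<forall>j\<in>set js. j < length S"
      and js4: "\<forall>t<length C. S ! (js ! t) = C ! t" and js5: "p \<in> set js"
      using cov p unfolding s_cover_def by blast
    obtain t where t: "t < length js" "js ! t = p" using js5 by (auto simp: in_set_conv_nth)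
    define u where "u = take t C"
    define v where "v = drop (Suc t) C"
    have Ct: "C ! t = S ! p" using js4 t js1 by auto
    have C: "C = u @ S ! p # v" unfolding u_def v_def using id_take_nth_drop[of t C] t js1 Ct by simp
    have lt: "\<And>i j. i < j \<Longrightarrow> j < length js \<Longrightarrow> js ! i < js ! j"
      using js2 by (simp add: sorted_wrt_iff_nth_less)
    have bnd: "\<And>i. i < length js \<Longrightarrow> js ! i < length S" using js3 by simp
    have "emb (take t js) u (take p S)"
      unfolding emb_def
    proof (intro conjI allI impI ballI)
      show "length (take t js) = length u" using t js1 by (simp add: u_def)
      show "sorted_wrt (<) (take t js)" using js2 by (simp add: sorted_wrt_take)
    next
      fix j assume "j \<in> set (take t js)"
      then obtain i where i: "i < t" "j = js ! i" using t by (auto simp: in_set_conv_nth)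
      have "js ! i < js ! t" by (rule lt) (use i t in auto)
      then show "j < length (take p S)" using i t p by simp
    next
      fix i assume "i < length u"
      then have i: "i < t" using t js1 by (simp add: u_def)
      have "js ! i < js ! t" by (rule lt) (use i t in auto)
      then have a: "js ! i < p" using t by simp
      have b: "S ! (js ! i) = C ! i" using js4 i t js1 by simp
      show "take p S ! (take t js ! i) = u ! i"
        using a b i by (simp add: u_def)
    qed
    then have U: "subseq u (take p S)" by (rule emb_subseq)
    have "emb (map (\<lambda>j. j - Suc p) (drop (Suc t) js)) v (drop (Suc p) S)"
      unfolding emb_def
    proof (intro conjI allI impI ballI)
      show "length (map (\<lambda>j. j - Suc p) (drop (Suc t) js)) = length v" using t js1 by (simp add: v_def)
      have s1: "sorted_wrt (<) (drop (Suc t) js)" using js2 by (simp add: sorted_wrt_drop)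
      have s2: "\<forall>j\<in>set (drop (Suc t) js). p < j"
      proof
        fix j assume "j \<in> set (drop (Suc t) js)"
        then obtain i where i: "i < length js - Suc t" "j = js ! (Suc t + i)" by (auto simp: in_set_conv_nth)
        have "js ! t < js ! (Suc t + i)" by (rule lt) (use i in auto)
        then show "p < j" using i t by simp
      qed
      have "sorted_wrt (\<lambda>a b. a - Suc p < b - Suc p) (drop (Suc t) js)"
        using s1 by (rule sorted_wrt_mono_rel[rotated]) (use s2 in auto)
      then show "sorted_wrt (<) (map (\<lambda>j. j - Suc p) (drop (Suc t) js))" by (simp add: sorted_wrt_map)
    next
      fix j assume "j \<in> set (map (\<lambda>j. j - Suc p) (drop (Suc t) js))"
      then obtain i where i: "i < length js - Suc t" "j = js ! (Suc t + i) - Suc p" by (auto simp: in_set_conv_nth)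
      have "js ! t < js ! (Suc t + i)" by (rule lt) (use i in linarith)+
      moreover have "js ! (Suc t + i) < length S" by (rule bnd) (use i in linarith)
      ultimately show "j < length (drop (Suc p) S)" using i t by simp
    next
      fix i assume i: "i < length v"
      then have i': "Suc t + i < length js" using js1 by (simp add: v_def)
      have "js ! t < js ! (Suc t + i)" by (rule lt) (use i' in auto)
      then have a: "p < js ! (Suc t + i)" using t by simp
      have b: "S ! (js ! (Suc t + i)) = C ! (Suc t + i)" using js4 i' js1 by simp
      have c: "js ! (Suc t + i) < length S" by (rule bnd) (use i' in auto)
      have "drop (Suc p) S ! (js ! (Suc t + i) - Suc p) = S ! (js ! (Suc t + i))"
        using a c by simp
      moreover have "drop (Suc t) js ! i = js ! (Suc t + i)"
        using i' by (subst nth_drop) auto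
      ultimately show "drop (Suc p) S ! (map (\<lambda>j. j - Suc p) (drop (Suc t) js) ! i) = v ! i"
        using i i' b by (simp add: v_def)
    qed
    then have V: "subseq v (drop (Suc p) S)" by (rule emb_subseq)
    show "\<exists>u v. C = u @ S ! p # v \<and> subseq u (take p S) \<and> subseq v (drop (Suc p) S)"
      using C U V by blast
  qed
next
  assume R: "\<forall>p<length S. \<exists>u v. C = u @ S ! p # v \<and> subseq u (take p S) \<and> subseq v (drop (Suc p) S)"
  show "s_cover C S" unfolding s_cover_def
  proof (intro allI impI)
    fix i assume i: "i < length S"
    obtain u v where C: "C = u @ S ! i # v" and U: "subseq u (take i S)" and V: "subseq v (drop (Suc i) S)"
      using R i by blast
    obtain ju where ju: "emb ju u (take i S)" using subseq_emb[OF U] by blast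
    obtain jv where jv: "emb jv v (drop (Suc i) S)" using subseq_emb[OF V] by blast
    define js where "js = ju @ i # map (\<lambda>j. j + Suc i) jv"
    have ju_lt: "\<forall>j\<in>set ju. j < i" using ju i by (auto simp: emb_def)
    have jv_lt: "\<forall>j\<in>set jv. j + Suc i < length S" using jv by (auto simp: emb_def)
    have "length js = length C" using ju jv C by (simp add: js_def emb_def)
    moreover have "sorted_wrt (<) js"
      unfolding js_def using ju jv ju_lt
      by (auto simp: emb_def sorted_wrt_append sorted_wrt_map)
    moreover have "\<forall>j\<in>set js. j < length S" using ju_lt jv_lt i by (auto simp: js_def)
    moreover have "\<forall>t<length C. S ! (js ! t) = C ! t"
    proof (intro allI impI)
      fix t assume t: "t < length C"
      have lu: "length ju = length u" and lv: "length jv = length v" using ju jv by (auto simp: emb_def)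
      consider (a) "t < length u" | (b) "t = length u" | (c) "length u < t" by linarith
      then show "S ! (js ! t) = C ! t"
      proof cases
        case a
        then have "ju ! t < i" using ju_lt lu by auto
        then show ?thesis using a ju lu by (auto simp: js_def C nth_append emb_def)
      next
        case b
        then show ?thesis using lu by (simp add: js_def C nth_append)
      next
        case c
        define s where "s = t - Suc (length u)"
        have t_eq: "t = Suc (length u) + s" using c by (simp add: s_def)
        have s: "s < length v" using t C t_eq by simp
        have "jv ! s + Suc i < length S" using jv_lt s lv by auto
        then have "S ! (jv ! s + Suc i) = drop (Suc i) S ! (jv ! s)"
          by (simp add: add.commute)
        also have "\<dots> = v ! s" using jv s by (auto simp: emb_def)
        finally show ?thesis using lu lv s by (simp add: js_def C nth_append t_eq)
      qed
    qed
    moreover have "i \<in> set js" by (simp add: js_def)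
    ultimately show "\<exists>js. length js = length C \<and> sorted_wrt (<) js \<and> (\<forall>j\<in>set js. j < length S) \<and>
      (\<forall>t<length C. S ! (js ! t) = C ! t) \<and> i \<in> set js" by blast
  qed
qed



lemma cover_subseq: "s_cover C T \<Longrightarrow> T \<noteq> [] \<Longrightarrow> subseq C T"
proof -
  assume c: "s_cover C T" and ne: "T \<noteq> []"
  then obtain u v where C: "C = u @ T ! 0 # v" and U: "subseq u (take 0 T)" and V: "subseq v (drop (Suc 0) T)"
    using cover_char[of C T] by auto
  have "u = []" using U by simp
  moreover have "T = T ! 0 # drop (Suc 0) T" using ne by (cases T) auto
  ultimately show ?thesis using C V by (metis append_Nil subseq_Cons2)
qed

lemma factor_cover:
  assumes c: "s_cover C T" and l: "length C < length T"
  shows "s_cover (P @ C @ Q) (P @ T @ Q)"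
proof -
  have "T \<noteq> []" using l by auto
  then have CT: "subseq C T" using cover_subseq[OF c] by blast
  have cT: "\<forall>p<length T. \<exists>u v. C = u @ T ! p # v \<and> subseq u (take p T) \<and> subseq v (drop (Suc p) T)"
    using c cover_char by blast
  show ?thesis unfolding cover_char
  proof (intro allI impI)
    fix p assume p: "p < length (P @ T @ Q)"
    consider (a) "p < length P" | (b) "length P \<le> p" "p < length P + length T" | (c) "length P + length T \<le> p"
      by linarith
    then show "\<exists>u v. P @ C @ Q = u @ (P @ T @ Q) ! p # v \<and> subseq u (take p (P @ T @ Q)) \<and>
          subseq v (drop (Suc p) (P @ T @ Q))"
    proof cases
      case a
      have e: "P @ C @ Q = take p P @ P ! p # (drop (Suc p) P @ C @ Q)"
        using id_take_nth_drop[OF a] by (metis append.assoc append_Cons)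
      have "subseq (drop (Suc p) P @ C @ Q) (drop (Suc p) P @ T @ Q)"
        using CT by (simp add: list_emb_append_mono)
      then show ?thesis using a e by (intro exI[of _ "take p P"] exI[of _ "drop (Suc p) P @ C @ Q"]) (simp add: nth_append)
    next
      case b
      define p' where "p' = p - length P"
      have p': "p' < length T" "p = length P + p'" using b by (auto simp: p'_def)
      obtain u v where C: "C = u @ T ! p' # v" and U: "subseq u (take p' T)" and V: "subseq v (drop (Suc p') T)"
        using cT p' by blast
      have "subseq (P @ u) (P @ take p' T)" using U by (simp add: subseq_append')
      moreover have "subseq (v @ Q) (drop (Suc p') T @ Q)" using V by (simp add: list_emb_append_mono)
      ultimately show ?thesis using p' C
        by (intro exI[of _ "P @ u"] exI[of _ "v @ Q"]) (simp add: nth_append)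
    next
      case c
      define p' where "p' = p - length P - length T"
      have p': "p' < length Q" "p = length P + length T + p'" using c p by (auto simp: p'_def)
      have e: "Q = take p' Q @ Q ! p' # drop (Suc p') Q" using id_take_nth_drop[OF p'(1)] .
      have "subseq (P @ C @ take p' Q) (P @ T @ take p' Q)" using CT by (simp add: list_emb_append_mono)
      moreover have "P @ C @ Q = (P @ C @ take p' Q) @ Q ! p' # drop (Suc p') Q"
        using e by (metis append.assoc)
      ultimately show ?thesis using p'
        by (intro exI[of _ "P @ C @ take p' Q"] exI[of _ "drop (Suc p') Q"]) (simp add: nth_append)
    qed
  qed
qed

lemma factor_prim: "s_primitive (P @ T @ Q) \<Longrightarrow> s_primitive T"
  unfolding s_primitive_def using factor_cover by fastforce

lemma adj_neq:
  assumes pr: "s_primitive S" and i: "Suc i < length S"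
  shows "S ! i \<noteq> S ! Suc i"
proof
  assume eq: "S ! i = S ! Suc i"
  have "drop i S = S ! i # S ! Suc i # drop (Suc (Suc i)) S"
    using i by (metis Cons_nth_drop_Suc Suc_lessD)
  then have "S = take i S @ [S ! i, S ! Suc i] @ drop (Suc (Suc i)) S"
    by (metis append_Cons append_Nil append_take_drop_id)
  then have "s_primitive [S ! i, S ! Suc i]" using pr factor_prim by metis
  moreover have "s_cover [S ! i] [S ! i, S ! Suc i]"
    unfolding cover_char
  proof (intro allI impI)
    fix p assume "p < length [S ! i, S ! Suc i]"
    then have "p = 0 \<or> p = 1" by auto
    then show "\<exists>u v. [S ! i] = u @ [S ! i, S ! Suc i] ! p # v \<and> subseq u (take p [S ! i, S ! Suc i]) \<and>
         subseq v (drop (Suc p) [S ! i, S ! Suc i])"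
      using eq by (intro exI[of _ "[]"]) auto
  qed
  ultimately show False unfolding s_primitive_def by fastforce
qed

lemma rename_prim:
  assumes pr: "s_primitive T" and inj: "inj_on h (set T)"
  shows "s_primitive (map h T)"
proof (rule ccontr)
  assume "\<not> s_primitive (map h T)"
  then obtain C' where c: "s_cover C' (map h T)" and l: "length C' < length (map h T)"
    unfolding s_primitive_def by blast
  define g where "g = the_inv_into (set T) h"
  have gh: "\<And>x. x \<in> set T \<Longrightarrow> g (h x) = x" unfolding g_def using inj by (simp add: the_inv_into_f_f)
  have mm: "\<And>W. set W \<subseteq> set T \<Longrightarrow> map g (map h W) = W"
    using gh by (simp add: map_idI subset_iff)
  have "s_cover (map g C') T"
    unfolding cover_char
  proof (intro allI impI)
    fix p assume p: "p < length T"
    then obtain u v where C: "C' = u @ map h T ! p # v" and U: "subseq u (take p (map h T))"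
      and V: "subseq v (drop (Suc p) (map h T))"
      using c cover_char[of C' "map h T"] by auto
    have "subseq (map g u) (map g (map h (take p T)))" using U subseq_map by (metis take_map)
    then have U': "subseq (map g u) (take p T)" using mm[of "take p T"] by (metis set_take_subset)
    have "subseq (map g v) (map g (map h (drop (Suc p) T)))" using V subseq_map by (metis drop_map)
    then have V': "subseq (map g v) (drop (Suc p) T)" using mm[of "drop (Suc p) T"] by (metis set_drop_subset)
    have "map g C' = map g u @ T ! p # map g v" using C p gh by simp
    then show "\<exists>u v. map g C' = u @ T ! p # v \<and> subseq u (take p T) \<and> subseq v (drop (Suc p) T)"
      using U' V' by blast
  qed
  moreover have "length (map g C') < length T" using l by simp
  ultimately show False using pr unfolding s_primitive_def by blast
qed

lemma gamma_bound:
  assumes pr: "s_primitive T" and c: "card (set T) \<le> m"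
  shows "enat (length T) \<le> gamma m"
proof -
  obtain h where h: "bij_betw h (set T) {0..<card (set T)}" using ex_bij_betw_finite_nat by blast
  have "s_primitive (map h T)" using rename_prim[OF pr] h bij_betw_imp_inj_on by blast
  moreover have "set (map h T) \<subseteq> {..<m}" using h c by (auto simp: bij_betw_def)
  ultimately have "map h T \<in> {w :: nat list. set w \<subseteq> {..<m} \<and> s_primitive w}" by simp
  then have "enat (length (map h T)) \<le> gamma m" unfolding gamma_def by (rule SUP_upper)
  then show ?thesis by simp
qed

lemma gamma_ge2: assumes "2 \<le> m" shows "enat 2 \<le> gamma m"
proof -
  have "s_primitive [0::nat, 1]"
    unfolding s_primitive_def
  proof
    assume "\<exists>C. s_cover C [0::nat, 1] \<and> length C < length [0::nat, 1]"
    then obtain C where c: "s_cover C [0::nat, 1]" and l: "length C < 2" by auto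
    obtain u v where "C = u @ [0::nat, 1] ! 0 # v" using c cover_char[of C "[0::nat,1]"] by fastforce
    then have C0: "C = u @ 0 # v" by simp
    obtain u' v' where "C = u' @ [0::nat, 1] ! 1 # v'" using c cover_char[of C "[0::nat,1]"] by fastforce
    then have C1: "C = u' @ 1 # v'" by simp
    from C0 l have "C = [0]" by (cases u; cases v) auto
    moreover from C1 l have "C = [1]" by (cases u'; cases v') auto
    ultimately show False by simp
  qed
  moreover have "card (set [0::nat, 1]) \<le> m" using assms by simp
  ultimately have "enat (length [0::nat, 1]) \<le> gamma m" by (rule gamma_bound)
  then show ?thesis by (simp add: numeral_2_eq_2)
qed



lemma subseq_rev: "subseq xs ys \<Longrightarrow> subseq (rev xs) (rev ys)"
proof (induction rule: list_emb.induct)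
  case (list_emb_Nil ys) then show ?case by simp
next
  case (list_emb_Cons xs ys y) then show ?case by (simp add: subseq_rev_drop_many)
next
  case (list_emb_Cons2 x y xs ys) then show ?case by (simp add: list_emb_append_mono)
qed

lemma subseq_rev_iff: "subseq (rev xs) (rev ys) \<longleftrightarrow> subseq xs ys"
  using subseq_rev by fastforce

lemma subseq_remdups: "subseq (remdups xs) xs"
  by (induction xs) auto

lemma subseq_suffix_trans: "subseq (A @ B) C \<Longrightarrow> subseq B C"
proof -
  assume "subseq (A @ B) C"
  then obtain us vs where "C = us @ vs" "subseq B vs" using list_emb_appendD by blast
  then show ?thesis by (simp add: list_emb_append2)
qed

lemma remdups_split: "remdups (L @ z # R) = Y1 @ z # Y2 \<Longrightarrow> subseq Y2 R"
proof (induction L arbitrary: Y1)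
  case Nil
  show ?case
  proof (cases "z \<in> set R")
    case True
    then have "remdups R = Y1 @ z # Y2" using Nil by simp
    then have "subseq (Y1 @ z # Y2) R" using subseq_remdups[of R] by simp
    then show ?thesis using subseq_suffix_trans[of "Y1 @ [z]" Y2 R] by simp
  next
    case False
    then have e: "z # remdups R = Y1 @ z # Y2" using Nil by simp
    show ?thesis
    proof (cases Y1)
      case Nil
      then have "Y2 = remdups R" using e by simp
      then show ?thesis using subseq_remdups by simp
    next
      case (Cons a Y1')
      then have "remdups R = Y1' @ z # Y2" using e by simp
      then have "z \<in> set (remdups R)" by simp
      then have "z \<in> set R" by simp
      then show ?thesis using False by simp
    qed
  qed
next
  case (Cons x L)
  show ?case
  proof (cases "x \<in> set (L @ z # R)")
    case True
    then show ?thesis using Cons by simp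
  next
    case False
    then have e: "x # remdups (L @ z # R) = Y1 @ z # Y2" using Cons.prems by simp
    show ?thesis
    proof (cases Y1)
      case Nil
      then show ?thesis using e False by simp
    next
      case (Cons a Y1')
      then show ?thesis using e Cons.IH by simp
    qed
  qed
qed

lemma claimB:
  assumes p: "p < length S" and Y: "remdups S = Y1 @ S ! p # Y2"
  shows "subseq Y2 (drop (Suc p) S)"
proof -
  have "remdups (take p S @ S ! p # drop (Suc p) S) = Y1 @ S ! p # Y2"
    using Y id_take_nth_drop[OF p] by simp
  then show ?thesis by (rule remdups_split)
qed

lemma claimA:
  assumes p: "p < length S" and X: "rev (remdups (rev S)) = X1 @ S ! p # X2"
  shows "subseq X1 (take p S)"
proof -
  have e: "take p S @ S ! p # drop (Suc p) S = S" using id_take_nth_drop[OF p] by simp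
  have "rev S = rev (drop (Suc p) S) @ S ! p # rev (take p S)" using arg_cong[OF e, of rev] by simp
  moreover have "remdups (rev S) = rev X2 @ S ! p # rev X1" using arg_cong[OF X, of rev] by simp
  ultimately have "remdups (rev (drop (Suc p) S) @ S ! p # rev (take p S)) = rev X2 @ S ! p # rev X1" by simp
  then have "subseq (rev X1) (rev (take p S))" by (rule remdups_split)
  then show ?thesis by (simp add: subseq_rev_iff)
qed

lemma absorb: "\<not> subseq w T \<Longrightarrow> w \<noteq> [] \<Longrightarrow> last w \<noteq> c \<Longrightarrow> \<not> subseq w (T @ [c])"
proof
  assume n: "\<not> subseq w T" and ne: "w \<noteq> []" and l: "last w \<noteq> c" and s: "subseq w (T @ [c])"
  have "subseq (rev w) (c # rev T)" using s subseq_rev by fastforce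
  moreover have e: "butlast w @ [last w] = w" using ne by simp
  have "rev w = last w # rev (butlast w)" using arg_cong[OF e, of rev] by simp
  ultimately have "subseq (last w # rev (butlast w)) (c # rev T)" by simp
  then have "subseq (last w # rev (butlast w)) (rev T)" using l by (rule subseq_Cons2_neq)
  then have "subseq (rev w) (rev T)" using \<open>rev w = _\<close> by metis
  then show False using n by (simp add: subseq_rev_iff)
qed

lemma factG:
  assumes pr: "s_primitive S" and gam: "gamma (card (set S) - 1) = enat g"
    and S: "S = P @ T @ Q" and x: "x \<in> set S" "x \<notin> set T"
  shows "length T \<le> g"
proof -
  have "s_primitive T" using pr S factor_prim by metis
  moreover have "card (set T) \<le> card (set S) - 1"
  proof -
    have "set T \<subseteq> set S - {x}" using S x by auto
    then have "card (set T) \<le> card (set S - {x})" by (simp add: card_mono)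
    then show ?thesis using x by simp
  qed
  ultimately have "enat (length T) \<le> gamma (card (set S) - 1)" by (rule gamma_bound)
  then show ?thesis using gam by simp
qed

lemma lemE:
  assumes pr: "s_primitive S" and gam: "gamma (card (set S) - 1) = enat g"
  shows "S = P @ T @ Q \<Longrightarrow> successively (\<noteq>) w \<Longrightarrow> set w \<subseteq> set S \<Longrightarrow> \<not> subseq w T \<Longrightarrow> length T \<le> length w * g"
proof (induction w arbitrary: P T)
  case Nil
  then show ?case by simp
next
  case (Cons x w')
  show ?case
  proof (cases "x \<in> set T")
    case False
    have "length T \<le> g" using factG[OF pr gam Cons.prems(1), of x] Cons.prems(3) False by simp
    then show ?thesis by simp
  next
    case True
    then obtain T0 T' where T: "T = T0 @ x # T'" and x0: "x \<notin> set T0" by (meson split_list_first)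
    have n': "\<not> subseq w' T'"
    proof
      assume "subseq w' T'"
      then have "subseq (x # w') (T0 @ x # T')" by (simp add: list_emb_append2)
      then show False using Cons.prems(4) T by simp
    qed
    show ?thesis
    proof (cases w')
      case Nil
      then show ?thesis using n' by simp
    next
      case (Cons y w'')
      have yx: "y \<noteq> x" using Cons.prems(2) Cons by auto
      have n'': "\<not> subseq w' (x # T')" using n' yx Cons subseq_Cons2_neq by metis
      have S': "S = (P @ T0) @ (x # T') @ Q" using Cons.prems(1) T by simp
      have IH: "length (x # T') \<le> length w' * g"
        using Cons.IH[OF S' _ _ n''] Cons.prems(2,3) by (simp add: Cons)
      have "length T0 \<le> g"
        using factG[OF pr gam, of P T0 "x # T' @ Q" x] Cons.prems(1,3) T x0 by simp
      then show ?thesis using IH T by simp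
    qed
  qed
qed



lemma dist_succ: "distinct xs \<Longrightarrow> successively (\<noteq>) xs"
  by (induction xs) (auto simp: successively_Cons)

lemma remdups_end: "c \<noteq> d \<Longrightarrow> \<exists>Z. remdups (xs @ [c, d]) = Z @ [c, d]"
proof (induction xs)
  case Nil then show ?case by auto
next
  case (Cons x xs)
  then obtain Z where "remdups (xs @ [c, d]) = Z @ [c, d]" by blast
  then show ?case by (cases "x \<in> set (xs @ [c, d])") (auto intro: exI[of _ "x # Z"])
qed

lemma two_elems: "length xs = 2 \<Longrightarrow> \<exists>u v. xs = [u, v]"
  by (cases xs; cases "tl xs") auto

lemma Y_end:
  assumes n: "2 \<le> length S" and cd: "S ! (length S - 2) \<noteq> S ! (length S - 1)"
  shows "\<exists>Y'. remdups S = Y' @ [S ! (length S - 2), S ! (length S - 1)]"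
proof -
  have "length (drop (length S - 2) S) = 2" using n by simp
  then obtain u v where uv: "drop (length S - 2) S = [u, v]" using two_elems by blast
  have S: "S = take (length S - 2) S @ [u, v]" using uv by (metis append_take_drop_id)
  have lt: "length (take (length S - 2) S) = length S - 2" using n by simp
  have "S ! (length S - 2) = u" using S lt by (metis nth_append_length)
  moreover have "S ! (length S - 1) = v"
  proof -
    have "length S - 1 = Suc (length (take (length S - 2) S))" using lt n by simp
    then show ?thesis using S by (metis nth_append_length_plus nth_Cons_Suc add_0 nth_Cons_0 Suc_eq_plus1 add.commute)
  qed
  ultimately show ?thesis using remdups_end[of u v "take (length S - 2) S"] cd S by auto
qed

lemma X_start:
  assumes n: "2 \<le> length S" and ab: "S ! 0 \<noteq> S ! 1"
  shows "\<exists>X'. rev (remdups (rev S)) = S ! 0 # S ! 1 # X'"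
proof -
  obtain a b R where S: "S = a # b # R" using n by (cases S; cases "tl S") auto
  have ab': "a \<noteq> b" using ab S by simp
  obtain Z where "remdups (rev R @ [b, a]) = Z @ [b, a]"
    using remdups_end[of b a "rev R"] ab' by blast
  then show ?thesis using S by (intro exI[of _ "rev Z"]) simp
qed



lemma core:
  fixes S :: "'a list"
  assumes pr: "s_primitive S" and kdef: "k = card (set S)" and k4: "4 \<le> k" and psi: "Psi S"
    and gam: "gamma (k - 1) = enat g"
  shows "length S \<le> (2 * k - 2) * g"
proof -
  define n where "n = length S"
  have gam': "gamma (card (set S) - 1) = enat g" using gam kdef by simp
  have "enat 2 \<le> gamma (k - 1)" using k4 by (intro gamma_ge2) simp
  then have g2: "2 \<le> g" using gam by simp
  have kn: "k \<le> n" unfolding kdef n_def by (rule card_length)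
  show ?thesis
  proof (cases "n \<le> 2 * k")
    case True
    have "2 * k \<le> (2 * k - 2) * 2" using k4 by simp
    also have "\<dots> \<le> (2 * k - 2) * g" using g2 by (intro mult_le_mono2)
    finally show ?thesis using True n_def by simp
  next
    case False
    then have nbig: "2 * k < n" by simp
    have n4: "4 \<le> n" using nbig k4 by simp
    have psi1: "S ! 0 \<noteq> S ! (n - 2)" "S ! 0 \<noteq> S ! (n - 1)" "S ! (n - 1) \<noteq> S ! 1"
      using psi n4 unfolding Psi_def n_def Let_def by auto
    have ad1: "S ! 0 \<noteq> S ! 1" using adj_neq[OF pr, of 0] n4 n_def by simp
    have ad2: "S ! (n - 2) \<noteq> S ! (n - 1)"
    proof -
      have "Suc (n - 2) = n - 1" using n4 by simp
      then show ?thesis using adj_neq[OF pr, of "n - 2"] n4 n_def by simp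
    qed
    define X where "X = rev (remdups (rev S))"
    define Y where "Y = remdups S"
    have dX: "distinct X" and dY: "distinct Y" unfolding X_def Y_def by simp_all
    have sX: "set X = set S" and sY: "set Y = set S" unfolding X_def Y_def by simp_all
    have lX: "length X = k" using dX sX kdef by (metis distinct_card)
    have lY: "length Y = k" using dY sY kdef by (metis distinct_card)
    obtain X' where Xs: "X = S ! 0 # S ! 1 # X'" using X_start[of S] ad1 n4 n_def X_def by auto
    obtain Y' where Ye: "Y = Y' @ [S ! (n - 2), S ! (n - 1)]" using Y_end[of S] ad2 n4 n_def Y_def by auto
    define Ys where "Ys = (if last X = hd Y then tl Y else Y)"
    obtain Y0 where Y0: "Y = Y0 @ Ys"
    proof (cases "last X = hd Y")
      case True
      have "Y \<noteq> []" using lY k4 by auto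
      then have "Y = [hd Y] @ tl Y" by simp
      then show ?thesis using that[of "[hd Y]"] True Ys_def by simp
    next
      case False
      then show ?thesis using that[of "[]"] Ys_def by simp
    qed
    have Ysne: "Ys \<noteq> []"
    proof -
      have "length Ys \<ge> k - 1" using lY Ys_def by auto
      then show ?thesis using k4 by auto
    qed
    have dYs: "distinct Ys" using dY Y0 by simp
    have lastX_hd: "last X \<noteq> hd Ys"
    proof (cases "last X = hd Y")
      case True
      have "length Y \<ge> 2" using lY k4 by simp
      then obtain y1 y2 Yr where "Y = y1 # y2 # Yr" by (cases Y; cases "tl Y") auto
      then show ?thesis using True Ys_def dY by auto
    next
      case False
      then show ?thesis using Ys_def by simp
    qed
    define C where "C = X @ Ys"
    have lC: "length C < n" using lX lY nbig unfolding C_def Ys_def by auto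
    have "\<not> s_cover C S" using pr lC n_def unfolding s_primitive_def by auto
    then obtain p where p: "p < n" and
      nc: "\<not> (\<exists>u v. C = u @ S ! p # v \<and> subseq u (take p S) \<and> subseq v (drop (Suc p) S))"
      unfolding cover_char n_def by blast
    define z where "z = S ! p"
    have zS: "z \<in> set S" using p n_def z_def by simp
    then obtain X1 X2 where X12: "X = X1 @ z # X2" using sX by (metis split_list)
    have sX1: "subseq X1 (take p S)" using claimA[of p S X1 X2] p n_def X12 X_def z_def by simp
    have notX: "\<not> subseq (X2 @ Ys) (drop (Suc p) S)"
    proof
      assume "subseq (X2 @ Ys) (drop (Suc p) S)"
      moreover have "C = X1 @ S ! p # (X2 @ Ys)" using X12 C_def z_def by simp
      ultimately show False using nc sX1 by blast
    qed
    have zYs: "z \<in> set Ys"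
    proof (rule ccontr)
      assume zn: "z \<notin> set Ys"
      have lh: "last X = hd Y" using zn zS sY Ys_def by (cases "last X = hd Y") auto
      then have YsY: "Ys = tl Y" using Ys_def by simp
      have "Y \<noteq> []" using lY k4 by auto
      then have Yc: "Y = hd Y # tl Y" by simp
      have "z \<in> set Y" using zS sY by simp
      then have zh: "z = hd Y" using zn YsY Yc by (cases Y) auto
      have "X2 = []"
      proof (rule ccontr)
        assume "X2 \<noteq> []"
        then have "last X = last X2" using X12 by simp
        then have "last X \<in> set X2" using \<open>X2 \<noteq> []\<close> by simp
        moreover have "z \<notin> set X2" using dX X12 by simp
        ultimately show False using lh zh by simp
      qed
      have "subseq (tl Y) (drop (Suc p) S)"
        using claimB[of p S "[]" "tl Y"] p n_def Yc zh z_def Y_def by simp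
      then show False using notX \<open>X2 = []\<close> YsY by simp
    qed
    then obtain Y1 Y2 where Y12: "Ys = Y1 @ z # Y2" by (metis split_list)
    have sY2: "subseq Y2 (drop (Suc p) S)"
      using claimB[of p S "Y0 @ Y1" Y2] p n_def Y0 Y12 Y_def z_def by simp
    have notY: "\<not> subseq (X @ Y1) (take p S)"
    proof
      assume "subseq (X @ Y1) (take p S)"
      moreover have "C = (X @ Y1) @ S ! p # Y2" using Y12 C_def z_def by simp
      ultimately show False using nc sY2 by blast
    qed
    have Xne: "X \<noteq> []" using Xs by simp
    have RL: "\<not> subseq (last X # Y1) (take p S)"
    proof
      assume "subseq (last X # Y1) (take p S)"
      then obtain us v vs where tp: "take p S = us @ v # vs" and v: "v = last X" and sv: "subseq Y1 vs"
        by (auto dest: list_emb_ConsD)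
      define q where "q = length us"
      have qp: "q < p"
      proof -
        have "length (us @ v # vs) = p" using arg_cong[OF tp, of length] p n_def by simp
        then show ?thesis using q_def by simp
      qed
      have Sq: "S ! q = last X"
      proof -
        have "take p S ! q = v" using tp q_def by simp
        then show ?thesis using qp v by simp
      qed
      have tq: "take q S = us"
      proof -
        have "take q (take p S) = us" using tp q_def by simp
        then show ?thesis using qp by (simp add: min_absorb1)
      qed
      have "X = butlast X @ S ! q # []" using Xne Sq by simp
      then have "subseq (butlast X) (take q S)" using claimA[of q S "butlast X" "[]"] qp p n_def X_def by simp
      then have "subseq (butlast X) us" using tq by simp
      then have sb: "subseq (butlast X @ last X # Y1) (us @ v # vs)" using sv v by (simp add: list_emb_append_mono)
      have eqXY: "X @ Y1 = butlast X @ last X # Y1"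
      proof -
        have e: "butlast X @ [last X] = X" using Xne by simp
        have "X @ Y1 = (butlast X @ [last X]) @ Y1" using e by simp
        then show ?thesis by simp
      qed
      have "subseq (X @ Y1) (take p S)" by (simp only: eqXY tp sb)
      then show False using notY by simp
    qed
    have lastwL: "last (last X # Y1) \<noteq> z"
    proof (cases "Y1 = []")
      case True
      then have "z = hd Ys" using Y12 by simp
      then show ?thesis using True lastX_hd by simp
    next
      case False
      have "z \<notin> set Y1" using dYs Y12 by simp
      moreover have "last Y1 \<in> set Y1" using False by simp
      ultimately show ?thesis using False by auto
    qed
    have nL: "\<not> subseq (last X # Y1) (take (Suc p) S)"
    proof -
      have "take (Suc p) S = take p S @ [z]" using p n_def z_def by (simp add: take_Suc_conv_app_nth)
      then show ?thesis using absorb[OF RL _ lastwL] by simp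
    qed
    have suL: "successively (\<noteq>) (last X # Y1)"
    proof -
      have "distinct Y1" using dYs Y12 by simp
      then have "successively (\<noteq>) Y1" by (rule dist_succ)
      moreover have "Y1 \<noteq> [] \<Longrightarrow> last X \<noteq> hd Y1" using lastX_hd Y12 by simp
      ultimately show ?thesis by (auto simp: successively_Cons)
    qed
    have setL: "set (last X # Y1) \<subseteq> set S"
    proof -
      have "last X \<in> set X" using Xne by simp
      moreover have "set Y1 \<subseteq> set Y" using Y0 Y12 by auto
      ultimately show ?thesis using sX sY by auto
    qed
    have bL: "length (take (Suc p) S) \<le> length (last X # Y1) * g"
      using lemE[OF pr gam', of "[]" "take (Suc p) S" "drop (Suc p) S" "last X # Y1"] suL setL nL by simp
    define y where "y = hd Ys"
    have Ysy: "Ys = y # tl Ys" using Ysne y_def by simp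
    have RR: "\<not> subseq (X2 @ [y]) (drop (Suc p) S)"
    proof
      assume "subseq (X2 @ [y]) (drop (Suc p) S)"
      then obtain us vs where D: "drop (Suc p) S = us @ vs" and s1: "subseq X2 us" and s2: "subseq [y] vs"
        by (auto dest: list_emb_appendD)
      from s2 obtain as y' bs where vs: "vs = as @ y' # bs" and yy: "y' = y"
        by (auto dest: list_emb_ConsD)
      define q where "q = Suc p + (length us + length as)"
      have D': "drop (Suc p) S = (us @ as) @ y # bs" using D vs yy by simp
      have lD: "length (drop (Suc p) S) = n - Suc p" using n_def by simp
      have "length ((us @ as) @ y # bs) = n - Suc p" using D' lD by simp
      then have qn: "q < n" using q_def by simp
      have Sq: "S ! q = y"
      proof -
        have "drop (Suc p) S ! (length us + length as) = y" using D' by (simp add: nth_append)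
        then show ?thesis using q_def p n_def by simp
      qed
      have dq: "drop (Suc q) S = bs"
      proof -
        have "drop (Suc (length us + length as)) (drop (Suc p) S) = bs" using D' by simp
        then show ?thesis using q_def by (simp add: add.commute add.left_commute)
      qed
      have "Y = (Y0) @ S ! q # tl Ys" using Y0 Ysy Sq by simp
      then have "subseq (tl Ys) bs" using claimB[of q S Y0 "tl Ys"] qn n_def Y_def dq by simp
      then have "subseq (y # tl Ys) (y # bs)" by (rule subseq_Cons2)
      then have "subseq (y # tl Ys) (as @ y # bs)" by (rule list_emb_append2)
      then have "subseq (X2 @ y # tl Ys) (us @ as @ y # bs)" using s1
        by (intro list_emb_append_mono)
      then have "subseq (X2 @ Ys) (drop (Suc p) S)" using D' Ysy by simp
      then show False using notX by simp
    qed
    have suR: "successively (\<noteq>) (X2 @ [y])"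
    proof -
      have "distinct X2" using dX X12 by simp
      then have "successively (\<noteq>) X2" by (rule dist_succ)
      moreover have "X2 \<noteq> [] \<Longrightarrow> last X2 \<noteq> y" using lastX_hd X12 y_def by simp
      ultimately show ?thesis by (auto simp: successively_append_iff)
    qed
    have setR: "set (X2 @ [y]) \<subseteq> set S"
    proof -
      have "set X2 \<subseteq> set X" using X12 by auto
      moreover have "y \<in> set Y" using Y0 Ysne y_def by simp
      ultimately show ?thesis using sX sY by auto
    qed
    have bR: "length (drop (Suc p) S) \<le> length (X2 @ [y]) * g"
      using lemE[OF pr gam', of "take (Suc p) S" "drop (Suc p) S" "[]" "X2 @ [y]"] suR setR RR by simp
    have lX12: "length X1 + length X2 + 1 = k" using X12 lX by simp
    have lY12: "length Y0 + length Y1 + length Y2 + 1 = k" using Y0 Y12 lY by simp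
    have revY: "rev Y ! length Y2 = z" using Y0 Y12 by (simp add: nth_append)
    have revY': "rev Y = S ! (n - 1) # S ! (n - 2) # rev Y'" using Ye by simp
    have idx: "length Y1 + length X2 + 2 \<le> 2 * k - 2"
    proof -
      consider (a) "length X1 = 0" | (b) "length X1 = 1" | (c) "2 \<le> length X1" by linarith
      then show ?thesis
      proof cases
        case a
        then have "X ! 0 = z" using X12 by simp
        then have z0: "z = S ! 0" using Xs by simp
        have "2 \<le> length Y2"
        proof (rule ccontr)
          assume "\<not> 2 \<le> length Y2"
          then have "length Y2 = 0 \<or> length Y2 = 1" by linarith
          then have "z = S ! (n - 1) \<or> z = S ! (n - 2)" using revY revY' by auto
          then show False using z0 psi1 by auto
        qed
        then show ?thesis using lX12 lY12 a by linarith
      next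
        case b
        then have "X ! 1 = z" using X12 by (cases X1) auto
        then have z1: "z = S ! 1" using Xs by simp
        have "1 \<le> length Y2"
        proof (rule ccontr)
          assume "\<not> 1 \<le> length Y2"
          then have "length Y2 = 0" by linarith
          then have "z = S ! (n - 1)" using revY revY' by auto
          then show False using z1 psi1 by auto
        qed
        then show ?thesis using lX12 lY12 b by linarith
      next
        case c
        then show ?thesis using lX12 lY12 by linarith
      qed
    qed
    have "n = length (take (Suc p) S) + length (drop (Suc p) S)" using p n_def by simp
    also have "\<dots> \<le> length (last X # Y1) * g + length (X2 @ [y]) * g" using bL bR by linarith
    also have "\<dots> = (length Y1 + length X2 + 2) * g" by (simp add: algebra_simps)
    also have "\<dots> \<le> (2 * k - 2) * g" using idx by (intro mult_le_mono1)
    finally show ?thesis using n_def by simp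
  qed
qed


theorem mainTheorem10:
  fixes S :: "'a list" and k :: nat
  assumes "k = card (Alph S)" and "k \<ge> 4"
    and "Psi S" and "s_primitive S"
  shows "enat (length S) \<le> enat (2 * k - 2) * gamma (k - 1)"
proof (cases "gamma (k - 1)")
  case (enat g)
  have "length S \<le> (2 * k - 2) * g"
    using core[of S k g] assms enat by (simp add: Alph_def)
  then show ?thesis using enat by simp
next
  case infinity
  have "2 * k - 2 \<noteq> 0" using assms(2) by simp
  then show ?thesis using infinity by simp
qed

end
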